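(* Let $p$ be a prime, $n \in \mathbb{N}$, and let $\Gamma = \bigoplus_{i \in I} \mathcal{C}(p^\infty)$ be a direct sum of copies of $\mathcal{C}(p^\infty)$ (over some index set $I$), regarded as a discrete abelian group. For $E \subset \Gamma$ let $E_{p^n} := \{\gamma^{p^{n-1}} : \gamma \in E\}$, and let $E_{1/p^n} := \{\xi_\gamma : \gamma \in E\}$ where, for each $\gamma \in E$, $\xi_\gamma \in \Gamma$ is an element with $\xi_\gamma^{p^{n-1}} = \gamma$. If $E$ is $p^n$-PR, then $E_{p^n}$ is $p$-PR and $|E_{p^n}| = |E|$. If $E$ is $p$-PR, then $E_{1/p^n}$ is $p^n$-PR and $|E_{1/p^n}| = |E|$.
   Context: $\mathcal{C}(p^\infty)$ denotes the group of all $p^m$-th roots of unity, $m \ge 1$. Group operation written multiplicatively. For a discrete abelian group $\Delta$ with compact dual $\widehat{\Delta}$ and $N \in \mathbb{N}$, a subset $E \subset \Delta$ is $N$-PR if for every function $\varphi: E \to \mathbb{Z}_N$ (the $N$-th roots of unity in the unit circle) there exists $x \in \widehat{\Delta}$ with $\varphi(\gamma) = \gamma(x)$ for all $\gamma \in E$. *)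

theory Defs
  imports Complex_Main "HOL-Library.Equipollence" "HOL-Computational_Algebra.Primes"
begin

definition prufer :: "nat \<Rightarrow> complex set" where
  "prufer p = {z. \<exists>m\<ge>1. z ^ (p ^ m) = 1}"

text \<open>Direct sum of copies of C(p^infinity) indexed by the set I: finitely supported
  functions I -> C(p^infinity) (value 1 outside I); group operation is pointwise product.\<close>
definition Gamma :: "nat \<Rightarrow> 'i set \<Rightarrow> ('i \<Rightarrow> complex) set" where
  "Gamma p I = {g. (\<forall>i\<in>I. g i \<in> prufer p) \<and> (\<forall>i. i \<notin> I \<longrightarrow> g i = 1)
                   \<and> finite {i. g i \<noteq> 1}}"

definition gmult :: "('i \<Rightarrow> complex) \<Rightarrow> ('i \<Rightarrow> complex) \<Rightarrow> ('i \<Rightarrow> complex)" where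
  "gmult g h = (\<lambda>i. g i * h i)"

definition gpow :: "('i \<Rightarrow> complex) \<Rightarrow> nat \<Rightarrow> ('i \<Rightarrow> complex)" where
  "gpow g k = (\<lambda>i. g i ^ k)"

text \<open>The dual group (Gamma discrete): homomorphisms from Gamma into the unit circle.
  For a character x, gamma(x) is the value x gamma.\<close>
definition dual :: "nat \<Rightarrow> 'i set \<Rightarrow> (('i \<Rightarrow> complex) \<Rightarrow> complex) set" where
  "dual p I = {x. (\<forall>g\<in>Gamma p I. \<forall>h\<in>Gamma p I. x (gmult g h) = x g * x h)
                  \<and> (\<forall>g\<in>Gamma p I. norm (x g) = 1)}"

definition roots_unity :: "nat \<Rightarrow> complex set" where
  "roots_unity N = {z. z ^ N = 1}"

definition PR :: "nat \<Rightarrow> 'i set \<Rightarrow> nat \<Rightarrow> ('i \<Rightarrow> complex) set \<Rightarrow> bool" where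
  "PR p I N E \<longleftrightarrow> E \<subseteq> Gamma p I \<and>
     (\<forall>\<phi>. (\<forall>\<gamma>\<in>E. \<phi> \<gamma> \<in> roots_unity N) \<longrightarrow>
        (\<exists>x\<in>dual p I. \<forall>\<gamma>\<in>E. \<phi> \<gamma> = x \<gamma>))"

end

theory Submission
  imports Defs
begin

lemma gpow_Gamma: "g \<in> Gamma p I \<Longrightarrow> gpow g k \<in> Gamma p I"
proof -
  assume g: "g \<in> Gamma p I"
  have a: "\<forall>i\<in>I. g i ^ k \<in> prufer p"
  proof
    fix i assume "i \<in> I"
    then obtain m where "m \<ge> 1" "g i ^ (p ^ m) = 1" using g by (auto simp: Gamma_def prufer_def)
    then have "(g i ^ k) ^ (p ^ m) = 1" by (metis power_mult mult.commute power_one)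
    then show "g i ^ k \<in> prufer p" using \<open>m \<ge> 1\<close> by (auto simp: prufer_def)
  qed
  have "{i. g i ^ k \<noteq> 1} \<subseteq> {i. g i \<noteq> 1}" by auto
  then have "finite {i. g i ^ k \<noteq> 1}" using g by (auto simp: Gamma_def intro: finite_subset)
  then show ?thesis using g a by (auto simp: Gamma_def gpow_def)
qed

lemma one_Gamma: "(\<lambda>i. 1) \<in> Gamma p I"
  by (auto simp: Gamma_def prufer_def intro: exI[of _ 1])

lemma dual_one: assumes "x \<in> dual p I" shows "x (\<lambda>i. 1) = 1"
proof -
  have m: "x (gmult g h) = x g * x h" if "g \<in> Gamma p I" "h \<in> Gamma p I" for g h
    using assms that unfolding dual_def by blast
  have g1: "gmult (\<lambda>i. 1) (\<lambda>i. 1) = (\<lambda>i::'a. 1::complex)" by (simp add: gmult_def)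
  have e: "x (\<lambda>i. 1) * 1 = x (\<lambda>i. 1) * x (\<lambda>i. 1)"
    using m[OF one_Gamma one_Gamma] unfolding g1 by simp
  have "norm (x (\<lambda>i. 1)) = 1" using assms one_Gamma[of p I] unfolding dual_def by blast
  then have nz: "x (\<lambda>i. 1) \<noteq> 0" by auto
  from e show ?thesis unfolding mult_left_cancel[OF nz] by simp
qed

lemma dual_gpow: assumes "x \<in> dual p I" "g \<in> Gamma p I" shows "x (gpow g k) = x g ^ k"
proof (induction k)
  case 0
  have "gpow g 0 = (\<lambda>i. 1)" by (simp add: gpow_def)
  then show ?case using dual_one[OF assms(1)] by simp
next
  case (Suc k)
  have "gpow g (Suc k) = gmult g (gpow g k)" by (simp add: gpow_def gmult_def)
  then have "x (gpow g (Suc k)) = x g * x (gpow g k)"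
    using assms gpow_Gamma[OF assms(2)] unfolding dual_def by auto
  then show ?case using Suc by simp
qed

lemma gpow_gpow: "gpow (gpow g a) b = gpow g (a * b)"
  by (simp add: gpow_def power_mult)

lemma gpow_1: "gpow g 1 = g"
  by (simp add: gpow_def)

lemma dual_norm: "x \<in> dual p I \<Longrightarrow> g \<in> Gamma p I \<Longrightarrow> norm (x g) = 1"
  by (auto simp: dual_def)

lemma dual_mult_pow:
  assumes "x \<in> dual p I" "z \<in> dual p I"
  shows "(\<lambda>g. x g * z g ^ k) \<in> dual p I"
  using assms unfolding dual_def by (auto simp: norm_mult norm_power power_mult_distrib)

lemma complex_root_unity_root:
  assumes "(z::complex) ^ q = 1" "q > 0" "k > 0"
  shows "\<exists>w. w ^ k = z"
proof -
  have "norm z ^ q = 1" using assms by (metis norm_one norm_power)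
  then have "norm z = 1" using assms by (metis norm_ge_zero power_eq_1_iff zero_less_iff_neq_zero)
  then have "z \<noteq> 0" by auto
  have "cis (Arg z / k) ^ k = cis (Arg z)" using assms by (simp add: DeMoivre)
  also have "\<dots> = z" using cis_Arg[OF \<open>z \<noteq> 0\<close>] \<open>norm z = 1\<close> by (simp add: sgn_div_norm)
  finally show ?thesis by blast
qed

lemma prim_root:
  assumes "prime p" "n \<ge> 1"
  shows "\<exists>w::complex. w ^ (p ^ n) = 1 \<and> w ^ (p ^ (n - 1)) \<noteq> 1"
proof -
  have p2: "p \<ge> 2" using assms prime_ge_2_nat by auto
  define w where "w = cis (2 * pi / real (p ^ n))"
  have pn: "p ^ n = p * p ^ (n - 1)" using assms by (metis Suc_diff_le diff_Suc_1 power_Suc)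
  have "w ^ (p ^ n) = cis (2 * pi)" unfolding w_def DeMoivre using p2 by simp
  moreover have "w ^ (p ^ (n - 1)) = cis (2 * pi / p)" unfolding w_def DeMoivre pn
    using p2 by (simp add: field_simps)
  moreover have "cis (2 * pi / p) \<noteq> 1"
  proof
    assume "cis (2 * pi / p) = 1"
    then have "cos (2 * pi / p) = 1" by (metis cis.sel(1) one_complex.sel(1))
    then obtain m :: int where m: "2 * pi / p = real_of_int m * 2 * pi" using cos_one_2pi_int by blast
    then have "2 * pi * (1 / real p) = 2 * pi * real_of_int m" by (simp add: algebra_simps)
    then have e: "1 / real p = real_of_int m" by (metis mult_left_cancel pi_neq_zero mult_eq_0_iff zero_neq_numeral)
    have "0 < 1 / real p" "1 / real p < 1" using p2 by auto
    then have "0 < m" "m < 1" unfolding e by simp_all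
    then show False by simp
  qed
  ultimately show ?thesis by auto
qed

lemma part2_claim:
  assumes pr: "PR p I p E" and p: "prime p"
  shows "n \<ge> 1 \<Longrightarrow> (\<forall>\<gamma>\<in>E. \<xi> \<gamma> \<in> Gamma p I \<and> gpow (\<xi> \<gamma>) (p ^ (n - 1)) = \<gamma>) \<Longrightarrow>
     (\<forall>\<gamma>\<in>E. \<phi> \<gamma> ^ (p ^ n) = 1) \<Longrightarrow> \<exists>x\<in>dual p I. \<forall>\<gamma>\<in>E. \<phi> \<gamma> = x (\<xi> \<gamma>)"
proof (induction n arbitrary: \<xi> \<phi> rule: nat_induct_at_least)
  case base
  then have "\<forall>\<gamma>\<in>E. \<xi> \<gamma> = \<gamma>" by (metis gpow_1 power_0 diff_self_eq_0)
  moreover obtain x where "x \<in> dual p I" "\<forall>\<gamma>\<in>E. \<phi> \<gamma> = x \<gamma>"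
    using pr base unfolding PR_def roots_unity_def by auto
  ultimately show ?case by auto
next
  case (Suc n)
  have EG: "E \<subseteq> Gamma p I" using pr by (simp add: PR_def)
  have p0: "p > 0" using p prime_gt_0_nat by auto
  obtain x0 where x0: "x0 \<in> dual p I" "\<forall>\<gamma>\<in>E. \<phi> \<gamma> ^ (p ^ n) = x0 \<gamma>"
    using pr unfolding PR_def roots_unity_def
    apply (elim conjE allE[of _ "\<lambda>\<gamma>. \<phi> \<gamma> ^ (p ^ n)"])
    using Suc.prems(2) by (auto simp: power_mult[symmetric] mult.commute)
  have x0xi: "x0 \<gamma> = x0 (\<xi> \<gamma>) ^ (p ^ n)" if "\<gamma> \<in> E" for \<gamma>
    using dual_gpow[OF x0(1), of "\<xi> \<gamma>" "p ^ n"] Suc.prems(1) that by auto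
  define r where "r = (\<lambda>\<gamma>. \<phi> \<gamma> / x0 (\<xi> \<gamma>))"
  define \<eta> where "\<eta> = (\<lambda>\<gamma>. gpow (\<xi> \<gamma>) p)"
  have nz: "x0 (\<xi> \<gamma>) \<noteq> 0" if "\<gamma> \<in> E" for \<gamma>
    using dual_norm[OF x0(1), of "\<xi> \<gamma>"] Suc.prems(1) that by auto
  have "\<forall>\<gamma>\<in>E. r \<gamma> ^ (p ^ n) = 1"
    using x0 x0xi nz unfolding r_def by (simp add: power_divide)
  moreover have "\<forall>\<gamma>\<in>E. \<eta> \<gamma> \<in> Gamma p I \<and> gpow (\<eta> \<gamma>) (p ^ (n - 1)) = \<gamma>"
  proof
    fix \<gamma> assume "\<gamma> \<in> E"
    have "p * p ^ (n - 1) = p ^ n" using Suc.hyps by (metis Suc_diff_le diff_Suc_1 power_Suc)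
    then show "\<eta> \<gamma> \<in> Gamma p I \<and> gpow (\<eta> \<gamma>) (p ^ (n - 1)) = \<gamma>"
      using Suc.prems(1) \<open>\<gamma> \<in> E\<close> gpow_Gamma[of "\<xi> \<gamma>" p I p] unfolding \<eta>_def gpow_gpow by auto
  qed
  ultimately obtain z where z: "z \<in> dual p I" "\<forall>\<gamma>\<in>E. r \<gamma> = z (\<eta> \<gamma>)"
    using Suc.IH by blast
  have eq: "\<forall>\<gamma>\<in>E. \<phi> \<gamma> = x0 (\<xi> \<gamma>) * z (\<xi> \<gamma>) ^ p"
  proof
    fix \<gamma> assume g: "\<gamma> \<in> E"
    have "z (\<eta> \<gamma>) = z (\<xi> \<gamma>) ^ p" unfolding \<eta>_def
      using dual_gpow[OF z(1)] Suc.prems(1) g by auto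
    moreover have "\<phi> \<gamma> / x0 (\<xi> \<gamma>) = z (\<eta> \<gamma>)" using z g unfolding r_def by auto
    ultimately show "\<phi> \<gamma> = x0 (\<xi> \<gamma>) * z (\<xi> \<gamma>) ^ p" using nz[OF g]
      by (metis nonzero_mult_div_cancel_left times_divide_eq_right)
  qed
  show ?case
  proof (rule bexI[of _ "\<lambda>g. x0 g * z g ^ p"])
    show "\<forall>\<gamma>\<in>E. \<phi> \<gamma> = x0 (\<xi> \<gamma>) * z (\<xi> \<gamma>) ^ p" by (rule eq)
    show "(\<lambda>g. x0 g * z g ^ p) \<in> dual p I" by (rule dual_mult_pow[OF x0(1) z(1)])
  qed
qed

theorem corollary3p3:
  fixes p n :: nat and I :: "'i set" and E :: "('i \<Rightarrow> complex) set"
  assumes "prime p" and "n \<ge> 1" and "E \<subseteq> Gamma p I"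
  shows "(PR p I (p ^ n) E \<longrightarrow>
            PR p I p ((\<lambda>\<gamma>. gpow \<gamma> (p ^ (n - 1))) ` E)
            \<and> (\<lambda>\<gamma>. gpow \<gamma> (p ^ (n - 1))) ` E \<approx> E)
       \<and> (PR p I p E \<longrightarrow>
            (\<forall>\<xi>. (\<forall>\<gamma>\<in>E. \<xi> \<gamma> \<in> Gamma p I \<and> gpow (\<xi> \<gamma>) (p ^ (n - 1)) = \<gamma>) \<longrightarrow>
               PR p I (p ^ n) (\<xi> ` E) \<and> \<xi> ` E \<approx> E))"
proof (intro conjI impI allI)
  let ?f = "\<lambda>\<gamma>. gpow \<gamma> (p ^ (n - 1))"
  have p0: "p > 0" using assms prime_gt_0_nat by auto
  have pn: "p ^ n = p ^ (n - 1) * p" using assms by (metis Suc_diff_le diff_Suc_1 power_Suc2)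
  assume pr: "PR p I (p ^ n) E"
  show "PR p I p (?f ` E)"
    unfolding PR_def
  proof (intro conjI allI impI)
    show "?f ` E \<subseteq> Gamma p I" using assms gpow_Gamma by blast
    fix \<psi> assume h: "\<forall>\<gamma>\<in>?f ` E. \<psi> \<gamma> \<in> roots_unity p"
    have "\<forall>\<gamma>\<in>E. \<exists>w. w ^ (p ^ (n - 1)) = \<psi> (?f \<gamma>)"
      using h complex_root_unity_root[OF _ p0] p0 unfolding roots_unity_def by auto
    then obtain \<phi> where \<phi>: "\<forall>\<gamma>\<in>E. \<phi> \<gamma> ^ (p ^ (n - 1)) = \<psi> (?f \<gamma>)" by metis
    have "\<forall>\<gamma>\<in>E. \<phi> \<gamma> \<in> roots_unity (p ^ n)"
      using \<phi> h unfolding roots_unity_def pn by (auto simp: power_mult)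
    then obtain x where x: "x \<in> dual p I" "\<forall>\<gamma>\<in>E. \<phi> \<gamma> = x \<gamma>"
      using pr unfolding PR_def by blast
    have "\<forall>\<gamma>\<in>?f ` E. \<psi> \<gamma> = x \<gamma>"
      using x \<phi> dual_gpow[OF x(1)] assms(3) by auto
    then show "\<exists>x\<in>dual p I. \<forall>\<gamma>\<in>?f ` E. \<psi> \<gamma> = x \<gamma>" using x by blast
  qed
  show "?f ` E \<approx> E"
  proof (rule inj_on_image_eqpoll_self, rule inj_onI, rule ccontr)
    fix a b assume ab: "a \<in> E" "b \<in> E" "?f a = ?f b" "a \<noteq> b"
    obtain w :: complex where w: "w ^ (p ^ n) = 1" "w ^ (p ^ (n - 1)) \<noteq> 1"
      using prim_root assms by blast
    define \<phi> where "\<phi> = (\<lambda>\<gamma>. if \<gamma> = b then w else 1)"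
    have "\<forall>\<gamma>\<in>E. \<phi> \<gamma> \<in> roots_unity (p ^ n)" using w by (auto simp: \<phi>_def roots_unity_def)
    then obtain x where x: "x \<in> dual p I" "\<forall>\<gamma>\<in>E. \<phi> \<gamma> = x \<gamma>"
      using pr unfolding PR_def by blast
    have "x a = 1" "x b = w" using x(2) ab by (auto simp: \<phi>_def)
    have "x (?f a) = x a ^ (p ^ (n - 1))" using dual_gpow[OF x(1), of a] ab(1) assms(3) by blast
    moreover have "x (?f b) = x b ^ (p ^ (n - 1))" using dual_gpow[OF x(1), of b] ab(2) assms(3) by blast
    ultimately have "x a ^ (p ^ (n - 1)) = x b ^ (p ^ (n - 1))" using ab(3) by metis
    then show False using \<open>x a = 1\<close> \<open>x b = w\<close> w by simp
  qed
next
  fix \<xi>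
  assume pr: "PR p I p E" and xi: "\<forall>\<gamma>\<in>E. \<xi> \<gamma> \<in> Gamma p I \<and> gpow (\<xi> \<gamma>) (p ^ (n - 1)) = \<gamma>"
  show "PR p I (p ^ n) (\<xi> ` E)"
    unfolding PR_def
  proof (intro conjI allI impI)
    show "\<xi> ` E \<subseteq> Gamma p I" using xi by auto
    fix \<phi> assume h: "\<forall>\<gamma>\<in>\<xi> ` E. \<phi> \<gamma> \<in> roots_unity (p ^ n)"
    have "\<forall>\<gamma>\<in>E. (\<phi> \<circ> \<xi>) \<gamma> ^ (p ^ n) = 1" using h by (auto simp: roots_unity_def)
    then obtain x where "x \<in> dual p I" "\<forall>\<gamma>\<in>E. (\<phi> \<circ> \<xi>) \<gamma> = x (\<xi> \<gamma>)"
      using part2_claim[OF pr assms(1) assms(2) xi] by blast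
    then show "\<exists>x\<in>dual p I. \<forall>\<gamma>\<in>\<xi> ` E. \<phi> \<gamma> = x \<gamma>" by auto
  qed
  show "\<xi> ` E \<approx> E"
  proof (rule inj_on_image_eqpoll_self, rule inj_onI)
    fix a b assume ab: "a \<in> E" "b \<in> E" "\<xi> a = \<xi> b"
    have "a = gpow (\<xi> a) (p ^ (n - 1))" using xi ab(1) by simp
    also have "\<dots> = gpow (\<xi> b) (p ^ (n - 1))" using ab(3) by simp
    also have "\<dots> = b" using xi ab(2) by simp
    finally show "a = b" .
  qed
qed

end
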